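(* $\mathrm{Adm}^{\mathrm{reg}}(\rho)\cap X_*(\check T)=\{t^{w\rho}: w\in W\}$, where $X_*(\check T)$ is viewed inside $\widetilde W$ via $\mu\mapsto t^\mu$.
   Context: $\check G$ is a split reductive group with split maximal torus $\check T$ and Borel $\check B\supset\check T$; the positive roots $\check\Phi^+$ are the roots of $\check T$ on $\check{\mathfrak g}/\check{\mathfrak b}$. $W$ is the finite Weyl group, $w_0$ its longest element, $\check Q^\vee\subset X_*(\check T)$ the coroot lattice, and $\widetilde W=X_*(\check T)\rtimes W$ the extended affine Weyl group (elements $t^\lambda w$), acting by affine transformations on $X_*(\check T)_{\mathbf R}$. The hyperplanes $H_{\alpha,k}=\{x:\langle x,\alpha\rangle=k\}$ cut out alcoves; $A_0=\{x: 0<\langle x,\alpha\rangle<1\ \forall\alpha\in\check\Phi^+\}$ is the dominant base alcove. Writing $\widetilde W=W_{\mathrm{aff}}\rtimes\Omega$ with $W_{\mathrm{aff}}=\check Q^\vee\rtimes W$ (a Coxeter group with simple reflections the reflections in the walls of $A_0$) and $\Omega$ the stabilizer of $A_0$, the Bruhat order is $\tilde w\omega\le\tilde w'\omega'$ iff $\omega=\omega'$ and $\tilde w\le\tilde w'$ in $W_{\mathrm{aff}}$. $\rho\in X_*(\check T)$ is an element with $\langle\rho,\alpha\rangle=1$ for all simple roots $\alpha$. $\mathrm{Adm}(\lambda)=\{\tilde w\in\widetilde W:\tilde w\le t^{w\lambda}$ for some $w\in W\}$. An element $\tilde w$ is regular if $\tilde w(A_0)$ is not contained in any strip $H_\alpha^{(0,1)}=\{x:0<\langle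 x,\alpha\rangle<1\}$ with $\alpha\in\check\Phi^+$; $\mathrm{Adm}^{\mathrm{reg}}(\lambda)$ is the set of regular elements of $\mathrm{Adm}(\lambda)$. *)

theory Defs
  imports "HOL-Analysis.Analysis"
begin

text \<open>Model: X_*(T) is the lattice of integral vectors in real^'n; the character
lattice X^*(T) is also identified with the integral vectors via the dot product,
so the pairing of a cocharacter x with a character a is x \<bullet> a.
Roots Phi are characters, the coroot map cor sends a root to its coroot
(a cocharacter).\<close>

definition lattice :: "(real^'n) set" where
  "lattice = {x. \<forall>i. x $ i \<in> \<int>}"

definition root_datum :: "(real^'n) set \<Rightarrow> (real^'n \<Rightarrow> real^'n) \<Rightarrow> bool" where
  "root_datum Phi cor \<longleftrightarrow>
     finite Phi \<and> Phi \<subseteq> lattice \<and> cor ` Phi \<subseteq> lattice \<and> inj_on cor Phi \<and>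
     (\<forall>a\<in>Phi. cor a \<bullet> a = 2) \<and>
     (\<forall>a\<in>Phi. (\<lambda>b. b - (cor a \<bullet> b) *\<^sub>R a) ` Phi = Phi) \<and>
     (\<forall>a\<in>Phi. (\<lambda>c. c - (c \<bullet> a) *\<^sub>R cor a) ` (cor ` Phi) = cor ` Phi)"

definition reduced_roots :: "(real^'n) set \<Rightarrow> bool" where
  "reduced_roots Phi \<longleftrightarrow> (\<forall>a\<in>Phi. \<forall>c::real. c *\<^sub>R a \<in> Phi \<longrightarrow> c = 1 \<or> c = -1)"

definition positive_system :: "(real^'n) set \<Rightarrow> (real^'n) set \<Rightarrow> bool" where
  "positive_system Phi Phip \<longleftrightarrow>
     (\<exists>v. (\<forall>a\<in>Phi. v \<bullet> a \<noteq> 0) \<and> Phip = {a\<in>Phi. v \<bullet> a > 0})"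

definition simple_roots :: "(real^'n) set \<Rightarrow> (real^'n) set" where
  "simple_roots Phip = {a\<in>Phip. \<not> (\<exists>b\<in>Phip. \<exists>c\<in>Phip. a = b + c)}"

definition refl_cochar :: "(real^'n \<Rightarrow> real^'n) \<Rightarrow> real^'n \<Rightarrow> real^'n \<Rightarrow> real^'n" where
  "refl_cochar cor a x = x - (x \<bullet> a) *\<^sub>R cor a"

inductive_set weyl_group :: "(real^'n) set \<Rightarrow> (real^'n \<Rightarrow> real^'n) \<Rightarrow> (real^'n \<Rightarrow> real^'n) set"
  for Phi cor where
    weyl_id: "id \<in> weyl_group Phi cor"
  | weyl_step: "a \<in> Phi \<Longrightarrow> w \<in> weyl_group Phi cor \<Longrightarrow> refl_cochar cor a \<circ> w \<in> weyl_group Phi cor"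

text \<open>Elements t^lambda w of the extended affine Weyl group as pairs (lambda, w).\<close>
type_synonym ('n) ewg = "(real^'n) \<times> (real^'n \<Rightarrow> real^'n)"

definition ext_affine_weyl :: "(real^'n) set \<Rightarrow> (real^'n \<Rightarrow> real^'n) \<Rightarrow> ('n::finite) ewg set" where
  "ext_affine_weyl Phi cor = {(l, w). l \<in> lattice \<and> w \<in> weyl_group Phi cor}"

definition act :: "('n::finite) ewg \<Rightarrow> real^'n \<Rightarrow> real^'n" where
  "act x v = fst x + snd x v"

definition ewmult :: "('n::finite) ewg \<Rightarrow> ('n::finite) ewg \<Rightarrow> ('n::finite) ewg" where
  "ewmult x y = (fst x + snd x (fst y), snd x \<circ> snd y)"

definition transl :: "real^'n \<Rightarrow> ('n::finite) ewg" where
  "transl m = (m, id)"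

definition base_alcove :: "(real^'n) set \<Rightarrow> (real^'n) set" where
  "base_alcove Phip = {x. \<forall>a\<in>Phip. 0 < x \<bullet> a \<and> x \<bullet> a < 1}"

definition separates :: "real^'n \<Rightarrow> real \<Rightarrow> (real^'n) set \<Rightarrow> (real^'n) set \<Rightarrow> bool" where
  "separates a k A B \<longleftrightarrow>
     ((\<forall>x\<in>A. x \<bullet> a < k) \<and> (\<forall>y\<in>B. y \<bullet> a > k)) \<or>
     ((\<forall>x\<in>A. x \<bullet> a > k) \<and> (\<forall>y\<in>B. y \<bullet> a < k))"

definition ew_length :: "(real^'n) set \<Rightarrow> ('n::finite) ewg \<Rightarrow> nat" where
  "ew_length Phip x =
     card {(a, k::int). a \<in> Phip \<and> separates a (of_int k) (base_alcove Phip) (act x ` base_alcove Phip)}"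

text \<open>Affine reflection in H_{a,k}: t^{k a^vee} s_a.\<close>
definition aff_refl :: "(real^'n \<Rightarrow> real^'n) \<Rightarrow> real^'n \<Rightarrow> int \<Rightarrow> ('n::finite) ewg" where
  "aff_refl cor a k = (of_int k *\<^sub>R cor a, refl_cochar cor a)"

definition bruhat_step :: "(real^'n) set \<Rightarrow> (real^'n \<Rightarrow> real^'n) \<Rightarrow> ('n::finite) ewg \<Rightarrow> ('n::finite) ewg \<Rightarrow> bool" where
  "bruhat_step Phip cor x y \<longleftrightarrow>
     (\<exists>a\<in>Phip. \<exists>k::int. y = ewmult (aff_refl cor a k) x) \<and> ew_length Phip x < ew_length Phip y"

definition bruhat_le :: "(real^'n) set \<Rightarrow> (real^'n \<Rightarrow> real^'n) \<Rightarrow> ('n::finite) ewg \<Rightarrow> ('n::finite) ewg \<Rightarrow> bool" where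
  "bruhat_le Phip cor = (bruhat_step Phip cor)\<^sup>*\<^sup>*"

definition adm :: "(real^'n) set \<Rightarrow> (real^'n) set \<Rightarrow> (real^'n \<Rightarrow> real^'n) \<Rightarrow> real^'n \<Rightarrow> ('n::finite) ewg set" where
  "adm Phi Phip cor l = {x \<in> ext_affine_weyl Phi cor.
       \<exists>w\<in>weyl_group Phi cor. bruhat_le Phip cor x (transl (w l))}"

definition regular :: "(real^'n) set \<Rightarrow> ('n::finite) ewg \<Rightarrow> bool" where
  "regular Phip x \<longleftrightarrow>
     \<not> (\<exists>a\<in>Phip. act x ` base_alcove Phip \<subseteq> {y. 0 < y \<bullet> a \<and> y \<bullet> a < 1})"

definition adm_reg :: "(real^'n) set \<Rightarrow> (real^'n) set \<Rightarrow> (real^'n \<Rightarrow> real^'n) \<Rightarrow> real^'n \<Rightarrow> ('n::finite) ewg set" where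
  "adm_reg Phi Phip cor l = {x \<in> adm Phi Phip cor l. regular Phip x}"

end

theory Submission
  imports Defs
begin


lemma lattice_inner_Ints:
  fixes x y :: "real^'n::finite"
  assumes "x \<in> lattice" "y \<in> lattice" shows "x \<bullet> y \<in> \<int>"
  using assms unfolding lattice_def inner_vec_def by (auto intro!: Ints_sum)

lemma Ints_pos_ge1: "(x::real) \<in> \<int> \<Longrightarrow> x > 0 \<Longrightarrow> x \<ge> 1"
  using Ints_nonzero_abs_ge1[of x] by auto

locale RD =
  fixes Phi Phip :: "(real^'n::finite) set" and cor :: "real^'n \<Rightarrow> real^'n" and rho v :: "real^'n"
  assumes rd: "root_datum Phi cor" and red: "reduced_roots Phi"
    and vreg: "\<forall>a\<in>Phi. v \<bullet> a \<noteq> 0" and Phip_eq: "Phip = {a\<in>Phi. v \<bullet> a > 0}"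
    and rho_lat: "rho \<in> lattice" and rho_simple: "\<forall>a\<in>simple_roots Phip. rho \<bullet> a = 1"
begin

definition sig :: "real^'n \<Rightarrow> real^'n \<Rightarrow> real^'n" where
  "sig a b = b - (cor a \<bullet> b) *\<^sub>R a"
definition tau :: "real^'n \<Rightarrow> real^'n \<Rightarrow> real^'n" where
  "tau a c = c - (c \<bullet> a) *\<^sub>R cor a"

lemma finPhi: "finite Phi" using rd unfolding root_datum_def by auto
lemma Phi_lat: "a \<in> Phi \<Longrightarrow> a \<in> lattice" using rd unfolding root_datum_def by auto
lemma cor_lat: "a \<in> Phi \<Longrightarrow> cor a \<in> lattice" using rd unfolding root_datum_def by auto
lemma cor_two: "a \<in> Phi \<Longrightarrow> cor a \<bullet> a = 2" using rd unfolding root_datum_def by auto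
lemma sig_img: "a \<in> Phi \<Longrightarrow> sig a ` Phi = Phi" using rd unfolding root_datum_def sig_def by auto
lemma tau_img: "a \<in> Phi \<Longrightarrow> tau a ` (cor ` Phi) = cor ` Phi" using rd unfolding root_datum_def tau_def by auto
lemma finPhip: "finite Phip" using finPhi Phip_eq by auto
lemma Phip_sub: "Phip \<subseteq> Phi" using Phip_eq by auto

lemma sig_in: "a \<in> Phi \<Longrightarrow> b \<in> Phi \<Longrightarrow> sig a b \<in> Phi" using sig_img by blast
lemma sig_self: "a \<in> Phi \<Longrightarrow> sig a a = - a"
  using cor_two[of a] by (simp add: sig_def scaleR_2)
lemma neg_in: "a \<in> Phi \<Longrightarrow> - a \<in> Phi" using sig_in[of a a] sig_self by auto
lemma sig_invol: "a \<in> Phi \<Longrightarrow> sig a (sig a b) = b"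
proof -
  assume a: "a \<in> Phi"
  have "cor a \<bullet> sig a b = - (cor a \<bullet> b)"
    using cor_two[OF a] by (simp add: sig_def inner_diff_right)
  then show ?thesis by (simp add: sig_def)
qed
lemma tau_invol: "a \<in> Phi \<Longrightarrow> tau a (tau a b) = b"
proof -
  assume a: "a \<in> Phi"
  have "tau a b \<bullet> a = - (b \<bullet> a)"
    using cor_two[OF a] by (simp add: tau_def inner_diff_left)
  then show ?thesis by (simp add: tau_def)
qed
lemma sig_inj: "a \<in> Phi \<Longrightarrow> inj (sig a)" by (metis injI sig_invol)
lemma tau_inj: "a \<in> Phi \<Longrightarrow> inj (tau a)" by (metis injI tau_invol)

lemma refl_inner: "refl_cochar cor a x \<bullet> b = x \<bullet> sig a b"
  by (simp add: refl_cochar_def sig_def inner_diff_left inner_diff_right inner_commute)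

lemma refl_lat: "a \<in> Phi \<Longrightarrow> x \<in> lattice \<Longrightarrow> refl_cochar cor a x \<in> lattice"
proof -
  assume a: "a \<in> Phi" and x: "x \<in> lattice"
  have "x \<bullet> a \<in> \<int>" using lattice_inner_Ints[OF x Phi_lat[OF a]] .
  with cor_lat[OF a] x show ?thesis unfolding lattice_def refl_cochar_def by auto
qed

lemma sum_sig: "a \<in> Phi \<Longrightarrow> (\<Sum>b\<in>Phi. f (sig a b)) = (\<Sum>b\<in>Phi. f b)"
proof -
  assume a: "a \<in> Phi"
  have "(\<Sum>b\<in>Phi. f b) = (\<Sum>b\<in>sig a ` Phi. f b)" using sig_img[OF a] by simp
  also have "\<dots> = (\<Sum>b\<in>Phi. f (sig a b))"
    using sum.reindex[of "sig a" Phi f] sig_inj[OF a] by (simp add: inj_on_def)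
  finally show ?thesis by simp
qed

lemma pos_or_neg: "b \<in> Phi \<Longrightarrow> b \<in> Phip \<or> - b \<in> Phip"
  using vreg neg_in Phip_eq by (cases "v \<bullet> b > 0") (auto simp: inner_minus_right)

lemma sum_Phi_abs: "(\<Sum>b\<in>Phi. \<bar>x \<bullet> b\<bar>) = 2 * (\<Sum>b\<in>Phip. \<bar>x \<bullet> b\<bar>)"
proof -
  let ?N = "uminus ` Phip"
  have Phi_un: "Phi = Phip \<union> ?N"
  proof
    show "Phi \<subseteq> Phip \<union> ?N"
    proof
      fix b assume "b \<in> Phi"
      then have "b \<in> Phip \<or> -b \<in> Phip" by (rule pos_or_neg)
      then show "b \<in> Phip \<union> ?N" by (auto intro: image_eqI[of b uminus "-b"])
    qed
    show "Phip \<union> ?N \<subseteq> Phi" using Phip_sub neg_in by auto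
  qed
  have disj: "Phip \<inter> ?N = {}" using Phip_eq by (auto simp: inner_minus_right)
  have "(\<Sum>b\<in>Phi. \<bar>x \<bullet> b\<bar>) = (\<Sum>b\<in>Phip. \<bar>x \<bullet> b\<bar>) + (\<Sum>b\<in>?N. \<bar>x \<bullet> b\<bar>)"
    using Phi_un disj finPhip by (simp add: sum.union_disjoint)
  also have "(\<Sum>b\<in>?N. \<bar>x \<bullet> b\<bar>) = (\<Sum>b\<in>Phip. \<bar>x \<bullet> b\<bar>)"
    by (subst sum.reindex) (auto simp: inner_minus_right)
  finally show ?thesis by simp
qed


definition Bf :: "real^'n \<Rightarrow> real^'n \<Rightarrow> real" where
  "Bf x y = (\<Sum>c\<in>cor ` Phi. (c \<bullet> x) * (c \<bullet> y))"

lemma Bf_sym: "Bf x y = Bf y x" by (simp add: Bf_def mult.commute)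

lemma Bf_lin: "Bf (p *\<^sub>R x + q *\<^sub>R y) z = p * Bf x z + q * Bf y z"
  by (simp add: Bf_def inner_add_right algebra_simps sum.distrib sum_distrib_left)

lemma Bf_quad: "Bf (p *\<^sub>R x + q *\<^sub>R y) (p *\<^sub>R x + q *\<^sub>R y)
    = p^2 * Bf x x + 2*p*q*Bf x y + q^2 * Bf y y"
proof -
  have "Bf (p *\<^sub>R x + q *\<^sub>R y) (p *\<^sub>R x + q *\<^sub>R y)
      = p * Bf x (p *\<^sub>R x + q *\<^sub>R y) + q * Bf y (p *\<^sub>R x + q *\<^sub>R y)" by (rule Bf_lin)
  also have "Bf x (p *\<^sub>R x + q *\<^sub>R y) = p * Bf x x + q * Bf y x"
    by (subst Bf_sym) (rule Bf_lin)
  also have "Bf y (p *\<^sub>R x + q *\<^sub>R y) = p * Bf x y + q * Bf y y"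
    by (subst Bf_sym) (rule Bf_lin)
  finally show ?thesis by (simp add: Bf_sym[of y x] power2_eq_square algebra_simps)
qed

lemma Bf_nonneg: "Bf x x \<ge> 0"
  unfolding Bf_def by (rule sum_nonneg) simp

lemma Bf_zero: "Bf x x = 0 \<Longrightarrow> g \<in> Phi \<Longrightarrow> cor g \<bullet> x = 0"
proof -
  assume z: "Bf x x = 0" and g: "g \<in> Phi"
  have "\<forall>c\<in>cor ` Phi. (c \<bullet> x) * (c \<bullet> x) = 0"
    using z finPhi unfolding Bf_def by (subst (asm) sum_nonneg_eq_0_iff) auto
  then show ?thesis using g by auto
qed

lemma Bf_self: "a \<in> Phi \<Longrightarrow> Bf a a \<ge> 4"
proof -
  assume a: "a \<in> Phi"
  have "(cor a \<bullet> a) * (cor a \<bullet> a) \<le> Bf a a"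
    unfolding Bf_def using a finPhi by (intro member_le_sum) auto
  then show ?thesis using cor_two[OF a] by simp
qed

lemma inner_sig_tau: "c \<bullet> sig a x = tau a c \<bullet> x"
  by (simp add: sig_def tau_def inner_diff_left inner_diff_right inner_commute)

lemma Bf_inv: "a \<in> Phi \<Longrightarrow> Bf (sig a x) (sig a y) = Bf x y"
proof -
  assume a: "a \<in> Phi"
  have "Bf (sig a x) (sig a y) = (\<Sum>c\<in>cor ` Phi. (tau a c \<bullet> x) * (tau a c \<bullet> y))"
    unfolding Bf_def inner_sig_tau ..
  also have "\<dots> = (\<Sum>c\<in>tau a ` (cor ` Phi). (c \<bullet> x) * (c \<bullet> y))"
    using sum.reindex[of "tau a" "cor ` Phi" "\<lambda>c. (c \<bullet> x) * (c \<bullet> y)"] tau_inj[OF a]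
    by (simp add: inj_on_def)
  also have "\<dots> = Bf x y" unfolding Bf_def tau_img[OF a] ..
  finally show ?thesis .
qed

lemma Bf_neg2: "Bf u (- z) = - Bf u z"
  by (simp add: Bf_def inner_minus_right sum_negf)

lemma Bf_refl: "a \<in> Phi \<Longrightarrow> 2 * Bf x a = Bf a a * (cor a \<bullet> x)"
proof -
  assume a: "a \<in> Phi"
  define k where "k = cor a \<bullet> x"
  have L: "Bf (1 *\<^sub>R x + (-k) *\<^sub>R a) a = Bf x a - k * Bf a a" using Bf_lin[of 1 x "-k" a a] by simp
  have "Bf (sig a x) (sig a a) = Bf x a" by (rule Bf_inv[OF a])
  moreover have "sig a x = 1 *\<^sub>R x + (-k) *\<^sub>R a" by (simp add: sig_def k_def)
  ultimately have "Bf (1 *\<^sub>R x + (-k) *\<^sub>R a) (- a) = Bf x a" using sig_self[OF a] by simp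
  then have "- (Bf x a - k * Bf a a) = Bf x a" using L Bf_neg2 by simp
  then show ?thesis by (simp add: algebra_simps k_def)
qed

lemma cor_inner_Int: "a \<in> Phi \<Longrightarrow> b \<in> Phi \<Longrightarrow> cor a \<bullet> b \<in> \<int>"
  by (rule lattice_inner_Ints[OF cor_lat Phi_lat])

lemma simple_nodecomp: "a \<in> simple_roots Phip \<Longrightarrow> x \<in> Phip \<Longrightarrow> y \<in> Phip \<Longrightarrow> a = x + y \<Longrightarrow> False"
  unfolding simple_roots_def by auto

lemma simple_Phip: "a \<in> simple_roots Phip \<Longrightarrow> a \<in> Phip"
  unfolding simple_roots_def by auto

lemma in_Phip: "b \<in> Phi \<Longrightarrow> v \<bullet> b > 0 \<Longrightarrow> b \<in> Phip" using Phip_eq by auto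
lemma Phip_pos: "b \<in> Phip \<Longrightarrow> v \<bullet> b > 0" using Phip_eq by auto
lemma Phip_Phi: "b \<in> Phip \<Longrightarrow> b \<in> Phi" using Phip_eq by auto

lemma no_family:
  assumes a: "a \<in> Phi" and b: "b \<in> Phi" and cd: "(cor a \<bullet> b) * (cor b \<bullet> a) = 4"
    and dpos: "cor b \<bullet> a > 0"
    and w0: "\<forall>g\<in>Phi. cor g \<bullet> (2 *\<^sub>R b - (cor a \<bullet> b) *\<^sub>R a) = 0"
    and wne: "2 *\<^sub>R b - (cor a \<bullet> b) *\<^sub>R a \<noteq> 0"
  shows False
proof -
  define c where "c = cor a \<bullet> b"
  define d where "d = cor b \<bullet> a"
  define w where "w = 2 *\<^sub>R b - c *\<^sub>R a"
  have cd4: "c * d = 4" using cd c_def d_def by simp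
  have hb: "b = (1/2) *\<^sub>R w + (c/2) *\<^sub>R a" by (simp add: w_def algebra_simps)
  have wa: "cor a \<bullet> w = 0" using w0 a w_def c_def by auto
  have wb: "cor b \<bullet> w = 0" using w0 b w_def c_def by auto
  have fam: "a - (real n * d / 2) *\<^sub>R w \<in> Phi" for n
  proof (induction n)
    case 0 then show ?case using a by simp
  next
    case (Suc n)
    define j where "j = real n * d / 2"
    define y where "y = a - j *\<^sub>R w"
    have y: "y \<in> Phi" using Suc y_def j_def by simp
    have e1: "cor b \<bullet> y = d" by (simp add: y_def d_def inner_diff_right wb)
    have e2a: "sig b y = y - d *\<^sub>R b" using e1 by (simp add: sig_def)
    have e2b: "y - d *\<^sub>R b = (1 - c*d/2) *\<^sub>R a - (j + d/2) *\<^sub>R w"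
      unfolding y_def by (subst hb) (simp add: algebra_simps)
    have e2: "sig b y = (1 - c*d/2) *\<^sub>R a - (j + d/2) *\<^sub>R w" using e2a e2b by simp
    have e3: "sig b y = - a - (j + d/2) *\<^sub>R w" using e2 cd4 by simp
    have e4: "cor a \<bullet> sig b y = -2" using e3 cor_two[OF a] wa by (simp add: inner_diff_right)
    have "sig a (sig b y) = sig b y - (cor a \<bullet> sig b y) *\<^sub>R a" by (rule sig_def)
    also have "\<dots> = sig b y + 2 *\<^sub>R a" using e4 by simp
    also have "\<dots> = a - (j + d/2) *\<^sub>R w" using e3 by (simp add: algebra_simps scaleR_2)
    finally have e5: "sig a (sig b y) = a - (j + d/2) *\<^sub>R w" .
    have "sig a (sig b y) \<in> Phi" using sig_in[OF a sig_in[OF b y]] .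
    moreover have "j + d/2 = real (Suc n) * d / 2" by (simp add: j_def algebra_simps)
    ultimately show ?case using e5 by simp
  qed
  have wne': "w \<noteq> 0" using wne w_def c_def by simp
  have "inj (\<lambda>n::nat. a - (real n * d / 2) *\<^sub>R w)"
  proof (rule injI)
    fix m n :: nat assume "a - (real m * d / 2) *\<^sub>R w = a - (real n * d / 2) *\<^sub>R w"
    then have "(real m * d / 2) *\<^sub>R w = (real n * d / 2) *\<^sub>R w" by simp
    then have "real m * d / 2 = real n * d / 2" using wne' by (simp add: scaleR_cancel_right)
    then show "m = n" using dpos d_def by simp
  qed
  then have "infinite (range (\<lambda>n::nat. a - (real n * d / 2) *\<^sub>R w))"
    by (rule range_inj_infinite)
  moreover have "range (\<lambda>n::nat. a - (real n * d / 2) *\<^sub>R w) \<subseteq> Phi" using fam by auto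
  ultimately show False using finPhi finite_subset by blast
qed


lemma Ints_ge2: "(c::real) \<in> \<int> \<Longrightarrow> c \<ge> 1 \<Longrightarrow> c \<noteq> 1 \<Longrightarrow> c \<ge> 2"
proof -
  assume "c \<in> \<int>" "c \<ge> 1" "c \<noteq> 1"
  then obtain k :: int where k: "c = of_int k" by (auto elim: Ints_cases)
  with \<open>c \<ge> 1\<close> \<open>c \<noteq> 1\<close> have "k \<ge> 2" by simp
  then show ?thesis using k by simp
qed

lemma perm:
  assumes a: "a \<in> simple_roots Phip" and b: "b \<in> Phip" and ne: "b \<noteq> a"
  shows "sig a b \<in> Phip"
proof (rule ccontr)
  assume nb: "sig a b \<notin> Phip"
  have aP: "a \<in> Phip" using simple_Phip[OF a] .
  have aPhi: "a \<in> Phi" and bPhi: "b \<in> Phi" using aP b Phip_Phi by auto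
  have va: "v \<bullet> a > 0" and vb: "v \<bullet> b > 0" using aP b Phip_pos by auto
  have sPhi: "sig a b \<in> Phi" using sig_in[OF aPhi bPhi] .
  have vs: "v \<bullet> sig a b < 0"
    using nb sPhi vreg in_Phip by (meson linorder_neqE_linordered_idom)
  define c where "c = cor a \<bullet> b"
  have cI: "c \<in> \<int>" using cor_inner_Int[OF aPhi bPhi] c_def by simp
  have vs': "v \<bullet> sig a b = v \<bullet> b - c * (v \<bullet> a)" by (simp add: sig_def c_def inner_diff_right)
  have cpos: "c > 0"
  proof (rule ccontr)
    assume "\<not> c > 0"
    then have "c * (v \<bullet> a) \<le> 0" using va by (simp add: mult_nonpos_nonneg)
    then show False using vs vs' vb by linarith
  qed
  have c1: "c \<ge> 1" using Ints_pos_ge1[OF cI cpos] .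
  define b' where "b' = c *\<^sub>R a - b"
  have b'eq: "b' = - sig a b" by (simp add: b'_def sig_def c_def)
  have b'P: "b' \<in> Phip" using b'eq neg_in[OF sPhi] vs in_Phip by (simp add: inner_minus_right)
  have cne1: "c \<noteq> 1"
  proof
    assume "c = 1"
    then have "a = b + b'" by (simp add: b'_def)
    then show False using simple_nodecomp[OF a b b'P] by simp
  qed
  have c2: "c \<ge> 2" using Ints_ge2[OF cI c1 cne1] .
  define d where "d = cor b \<bullet> a"
  have dI: "d \<in> \<int>" using cor_inner_Int[OF bPhi aPhi] d_def by simp
  have h1: "2 * Bf b a = Bf a a * c" using Bf_refl[OF aPhi, of b] c_def by simp
  have h2: "2 * Bf a b = Bf b b * d" using Bf_refl[OF bPhi, of a] d_def by simp
  have A4: "Bf a a \<ge> 4" and B4: "Bf b b \<ge> 4" using Bf_self aPhi bPhi by auto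
  have hcd: "Bf a a * c = Bf b b * d" using h1 h2 Bf_sym[of a b] by simp
  have dpos: "d > 0"
  proof (rule ccontr)
    assume "\<not> d > 0"
    then have "Bf b b * d \<le> 0" using B4 by (simp add: mult_nonneg_nonpos)
    moreover have "Bf a a * c > 0" using A4 cpos by simp
    ultimately show False using hcd by simp
  qed
  have d1: "d \<ge> 1" using Ints_pos_ge1[OF dI dpos] .
  define w where "w = 2 *\<^sub>R b - c *\<^sub>R a"
  have "w = 2 *\<^sub>R b + (-c) *\<^sub>R a" by (simp add: w_def)
  then have "Bf w w = 2^2 * Bf b b + 2*2*(-c) * Bf b a + (-c)^2 * Bf a a"
    using Bf_quad[of 2 b "-c" a] by simp
  also have "\<dots> = 4 * Bf b b - c * (Bf a a * c)" using h1 by (simp add: power2_eq_square algebra_simps)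
  also have "\<dots> = Bf b b * (4 - c * d)" using hcd by (simp add: algebra_simps)
  finally have Bw: "Bf w w = Bf b b * (4 - c * d)" .
  have cd4: "c * d \<le> 4"
  proof (rule ccontr)
    assume "\<not> c * d \<le> 4"
    then have "Bf b b * (4 - c * d) < 0" using B4 by (simp add: mult_pos_neg)
    then show False using Bw Bf_nonneg[of w] by simp
  qed
  have cd_ne4: "c * d \<noteq> 4"
  proof
    assume cd: "c * d = 4"
    then have "Bf w w = 0" using Bw by simp
    then have w0: "\<forall>g\<in>Phi. cor g \<bullet> w = 0" using Bf_zero by blast
    have wne: "w \<noteq> 0"
    proof
      assume "w = 0"
      then have "2 *\<^sub>R b = c *\<^sub>R a" by (simp add: w_def)
      then have "(1/2) *\<^sub>R (2 *\<^sub>R b) = (1/2) *\<^sub>R (c *\<^sub>R a)" by simp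
      then have "b = (c/2) *\<^sub>R a" by simp
      then have "(c/2) *\<^sub>R a \<in> Phi" using bPhi by simp
      then have "c/2 = 1 \<or> c/2 = -1" using red aPhi unfolding reduced_roots_def by blast
      then show False
      proof
        assume "c/2 = 1" then have "b = a" using \<open>b = (c/2) *\<^sub>R a\<close> by simp
        then show False using ne by simp
      next
        assume "c/2 = -1" then show False using cpos by simp
      qed
    qed
    show False using no_family[OF aPhi bPhi] cd dpos w0 wne
      unfolding c_def d_def w_def by simp
  qed
  obtain ci di :: int where ci: "c = of_int ci" and di: "d = of_int di"
    using cI dI by (auto elim!: Ints_cases)
  have "ci \<ge> 2" "di \<ge> 1" "ci * di \<le> 4" "ci * di \<noteq> 4"
    using c2 d1 cd4 cd_ne4 ci di by (simp_all flip: of_int_mult)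
  then have "di = 1 \<and> (ci = 2 \<or> ci = 3)"
  proof -
    assume h: "ci \<ge> 2" "di \<ge> 1" "ci * di \<le> 4" "ci * di \<noteq> 4"
    have "di \<le> 1"
    proof (rule ccontr)
      assume "\<not> di \<le> 1"
      then have "ci * di \<ge> 2 * 2" using h by (intro mult_mono) auto
      then show False using h by simp
    qed
    then have "di = 1" using h by simp
    then show ?thesis using h by auto
  qed
  then have d_1: "d = 1" and c23: "c = 2 \<or> c = 3" using ci di by auto
  have abPhi: "a - b \<in> Phi"
    using sig_in[OF bPhi aPhi] d_1 by (simp add: sig_def d_def)
  have "v \<bullet> (a - b) \<noteq> 0" using vreg abPhi by blast
  moreover have "\<not> v \<bullet> (a - b) > 0"
  proof
    assume "v \<bullet> (a - b) > 0"
    then have "a - b \<in> Phip" using in_Phip abPhi by simp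
    moreover have "a = b + (a - b)" by simp
    ultimately show False using simple_nodecomp[OF a b] by blast
  qed
  ultimately have eP: "b - a \<in> Phip"
    using in_Phip neg_in[OF abPhi] by (simp add: inner_diff_right)
  from c23 show False
  proof
    assume "c = 2"
    then have "b' = (a + a) - b" by (simp add: b'_def scaleR_2)
    then have "a = b' + (b - a)" by simp
    then show False using simple_nodecomp[OF a b'P eP] by simp
  next
    assume c3: "c = 3"
    have ce: "cor a \<bullet> (b - a) = 1" using c3 cor_two[OF aPhi] c_def by (simp add: inner_diff_right)
    have "sig a (b - a) = b - a - a" using ce by (simp add: sig_def)
    then have b2Phi: "b - a - a \<in> Phi"
      using sig_in[OF aPhi Phip_Phi[OF eP]] by simp
    have t3: "(3::real) *\<^sub>R a = a + a + a"
    proof -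
      have "(3::real) *\<^sub>R a = (2 + 1) *\<^sub>R a" by simp
      also have "\<dots> = 2 *\<^sub>R a + a" by (simp only: scaleR_add_left scaleR_one)
      also have "\<dots> = a + a + a" by (simp add: scaleR_2)
      finally show ?thesis .
    qed
    have b'3: "b' = a + a + a - b" using c3 t3 by (simp add: b'_def)
    have "v \<bullet> (b - a - a) \<noteq> 0" using vreg b2Phi by blast
    then show False
    proof (cases "v \<bullet> (b - a - a) > 0")
      case True
      then have P: "b - a - a \<in> Phip" using in_Phip b2Phi by simp
      have "a = b' + (b - a - a)" using b'3 by simp
      then show False using simple_nodecomp[OF a b'P P] by simp
    next
      case False
      then have "v \<bullet> (b - a - a) < 0" using \<open>v \<bullet> (b - a - a) \<noteq> 0\<close> by simp
      moreover have "- (b - a - a) = a + a - b" by simp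
      ultimately have P: "a + a - b \<in> Phip" using in_Phip neg_in[OF b2Phi]
        by (metis inner_minus_right neg_0_less_iff_less)
      have "a = (b - a) + (a + a - b)" by simp
      then show False using simple_nodecomp[OF a eP P] by simp
    qed
  qed
qed


lemma height_induct:
  assumes "b \<in> Phip"
    and base: "\<And>a. a \<in> simple_roots Phip \<Longrightarrow> P a"
    and step: "\<And>x y. x \<in> Phip \<Longrightarrow> y \<in> Phip \<Longrightarrow> P x \<Longrightarrow> P y \<Longrightarrow> P (x + y)"
  shows "P b"
  using assms(1)
proof (induction "card {c\<in>Phip. v \<bullet> c < v \<bullet> b}" arbitrary: b rule: less_induct)
  case less
  show ?case
  proof (cases "b \<in> simple_roots Phip")
    case True then show ?thesis by (rule base)
  next
    case False
    then obtain x y where x: "x \<in> Phip" and y: "y \<in> Phip" and bxy: "b = x + y"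
      using less.prems unfolding simple_roots_def by auto
    have vx: "v \<bullet> x > 0" and vy: "v \<bullet> y > 0" using x y Phip_pos by auto
    have lt: "card {c\<in>Phip. v \<bullet> c < v \<bullet> z} < card {c\<in>Phip. v \<bullet> c < v \<bullet> b}"
      if z: "z \<in> Phip" and vz: "v \<bullet> z < v \<bullet> b" for z
    proof (rule psubset_card_mono)
      show "finite {c\<in>Phip. v \<bullet> c < v \<bullet> b}" using finPhip by simp
      show "{c\<in>Phip. v \<bullet> c < v \<bullet> z} \<subset> {c\<in>Phip. v \<bullet> c < v \<bullet> b}"
        using z vz by auto
    qed
    have "v \<bullet> x < v \<bullet> b" "v \<bullet> y < v \<bullet> b" using vx vy bxy by (auto simp: inner_add_right)
    then have "P x" "P y" using less.hyps lt x y by auto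
    then show ?thesis using step x y bxy by simp
  qed
qed

lemma rho_pos: assumes b: "b \<in> Phip" shows "rho \<bullet> b \<ge> 1"
proof (rule height_induct[where P="\<lambda>b. rho \<bullet> b \<ge> 1", OF b])
  fix a assume "a \<in> simple_roots Phip" then show "rho \<bullet> a \<ge> 1" using rho_simple by simp
next
  fix x y assume "rho \<bullet> x \<ge> 1" "rho \<bullet> y \<ge> 1"
  then show "rho \<bullet> (x + y) \<ge> 1" by (simp add: inner_add_right)
qed

lemma rho_nz: "b \<in> Phi \<Longrightarrow> rho \<bullet> b \<noteq> 0"
  using pos_or_neg[of b] rho_pos[of b] rho_pos[of "-b"] by (auto simp: inner_minus_right)

lemma dominant:
  assumes x: "x \<in> lattice" and pos: "\<forall>a\<in>Phip. x \<bullet> a > 0" and b: "b \<in> Phip"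
  shows "x \<bullet> b \<ge> rho \<bullet> b"
proof (rule height_induct[where P="\<lambda>b. x \<bullet> b \<ge> rho \<bullet> b", OF b])
  fix a assume a: "a \<in> simple_roots Phip"
  have aP: "a \<in> Phip" using simple_Phip[OF a] .
  have "x \<bullet> a \<in> \<int>" using lattice_inner_Ints[OF x Phi_lat[OF Phip_Phi[OF aP]]] .
  then have "x \<bullet> a \<ge> 1" using Ints_pos_ge1 pos aP by blast
  then show "x \<bullet> a \<ge> rho \<bullet> a" using rho_simple a by simp
next
  fix y z assume "x \<bullet> y \<ge> rho \<bullet> y" "x \<bullet> z \<ge> rho \<bullet> z"
  then show "x \<bullet> (y + z) \<ge> rho \<bullet> (y + z)" by (simp add: inner_add_right)
qed

lemma simple_min:
  assumes a: "a \<in> Phip" and xa: "x \<bullet> a < 0"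
    and mn: "\<forall>b\<in>Phip. x \<bullet> b < 0 \<longrightarrow> v \<bullet> a \<le> v \<bullet> b"
  shows "a \<in> simple_roots Phip"
  unfolding simple_roots_def
proof (safe)
  show "a \<in> Phip" by (rule a)
next
  fix b c assume b: "b \<in> Phip" and c: "c \<in> Phip" and abc: "a = b + c"
  have "x \<bullet> b < 0 \<or> x \<bullet> c < 0" using xa abc by (auto simp: inner_add_right)
  moreover have "v \<bullet> b < v \<bullet> a" "v \<bullet> c < v \<bullet> a"
    using b c abc Phip_pos by (auto simp: inner_add_right)
  ultimately show False using mn b c by force
qed

lemma main_ineq:
  assumes "x \<in> lattice" and "\<forall>b\<in>Phi. x \<bullet> b \<noteq> 0"
  shows "(\<Sum>b\<in>Phi. \<bar>rho \<bullet> b\<bar>) \<le> (\<Sum>b\<in>Phi. \<bar>x \<bullet> b\<bar>)"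
  using assms
proof (induction "card {b\<in>Phip. x \<bullet> b < 0}" arbitrary: x rule: less_induct)
  case less
  let ?S = "{b\<in>Phip. x \<bullet> b < 0}"
  show ?case
  proof (cases "?S = {}")
    case True
    then have pos: "\<forall>a\<in>Phip. x \<bullet> a > 0" using less.prems Phip_Phi
      by (metis (mono_tags, lifting) empty_Collect_eq linorder_neqE_linordered_idom)
    have "(\<Sum>b\<in>Phip. \<bar>rho \<bullet> b\<bar>) \<le> (\<Sum>b\<in>Phip. \<bar>x \<bullet> b\<bar>)"
    proof (rule sum_mono)
      fix b assume b: "b \<in> Phip"
      show "\<bar>rho \<bullet> b\<bar> \<le> \<bar>x \<bullet> b\<bar>"
        using dominant[OF less.prems(1) pos b] rho_pos[OF b] by simp
    qed
    then show ?thesis using sum_Phi_abs[of rho] sum_Phi_abs[of x] by simp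
  next
    case False
    have finS: "finite ?S" using finPhip by simp
    define mv where "mv = Min ((\<lambda>b. v \<bullet> b) ` ?S)"
    have "mv \<in> (\<lambda>b. v \<bullet> b) ` ?S" unfolding mv_def using finS False by (intro Min_in) auto
    then obtain a where aS: "a \<in> ?S" and amv: "v \<bullet> a = mv" by auto
    have amin: "\<forall>b\<in>Phip. x \<bullet> b < 0 \<longrightarrow> v \<bullet> a \<le> v \<bullet> b"
      using finS amv unfolding mv_def by (auto intro: Min_le)
    have aP: "a \<in> Phip" and xa: "x \<bullet> a < 0" using aS by auto
    have asim: "a \<in> simple_roots Phip" using simple_min[OF aP xa amin] .
    have aPhi: "a \<in> Phi" using Phip_Phi[OF aP] .
    define x' where "x' = refl_cochar cor a x"
    have x'lat: "x' \<in> lattice" using refl_lat[OF aPhi less.prems(1)] x'_def by simp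
    have x'b: "x' \<bullet> b = x \<bullet> sig a b" for b using refl_inner x'_def by simp
    have x'nz: "\<forall>b\<in>Phi. x' \<bullet> b \<noteq> 0" using x'b less.prems(2) sig_in[OF aPhi] by simp
    have sumeq: "(\<Sum>b\<in>Phi. \<bar>x' \<bullet> b\<bar>) = (\<Sum>b\<in>Phi. \<bar>x \<bullet> b\<bar>)"
      using x'b sum_sig[OF aPhi, of "\<lambda>t. \<bar>x \<bullet> t\<bar>"] by simp
    let ?S' = "{b\<in>Phip. x' \<bullet> b < 0}"
    have sub: "sig a ` ?S' \<subseteq> ?S - {a}"
    proof
      fix t assume "t \<in> sig a ` ?S'"
      then obtain b where b: "b \<in> Phip" "x \<bullet> sig a b < 0" and t: "t = sig a b"
        using x'b by auto
      have "b \<noteq> a"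
      proof
        assume "b = a"
        then have "x \<bullet> sig a b = - (x \<bullet> a)" using sig_self[OF aPhi] by (simp add: inner_minus_right)
        then show False using b xa by simp
      qed
      then have sP: "sig a b \<in> Phip" using perm[OF asim b(1)] by simp
      have "sig a b \<noteq> a"
      proof
        assume "sig a b = a"
        then have "b = - a" using sig_invol[OF aPhi, of b] sig_self[OF aPhi] by simp
        then have "v \<bullet> b = - (v \<bullet> a)" by (simp add: inner_minus_right)
        moreover have "v \<bullet> b > 0" "v \<bullet> a > 0" using b(1) aP Phip_pos by auto
        ultimately show False by linarith
      qed
      then show "t \<in> ?S - {a}" using sP b t by simp
    qed
    have "card ?S' = card (sig a ` ?S')"
      using sig_inj[OF aPhi] by (simp add: card_image inj_on_def)
    also have "\<dots> \<le> card (?S - {a})" using sub finS by (intro card_mono) auto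
    also have "\<dots> < card ?S" using finS aS by (rule card_Diff1_less)
    finally have "card ?S' < card ?S" .
    then have "(\<Sum>b\<in>Phi. \<bar>rho \<bullet> b\<bar>) \<le> (\<Sum>b\<in>Phi. \<bar>x' \<bullet> b\<bar>)"
      using less.hyps x'lat x'nz by blast
    then show ?thesis using sumeq by simp
  qed
qed

lemma W_props:
  assumes "w \<in> weyl_group Phi cor"
  shows "(\<forall>x. x \<in> lattice \<longrightarrow> w x \<in> lattice) \<and>
         (\<forall>x. (\<Sum>b\<in>Phi. \<bar>w x \<bullet> b\<bar>) = (\<Sum>b\<in>Phi. \<bar>x \<bullet> b\<bar>)) \<and>
         (\<forall>x. (\<forall>b\<in>Phi. x \<bullet> b \<noteq> 0) \<longrightarrow> (\<forall>b\<in>Phi. w x \<bullet> b \<noteq> 0))"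
  using assms
proof (induction rule: weyl_group.induct)
  case weyl_id then show ?case by simp
next
  case (weyl_step a w)
  have l: "refl_cochar cor a (w x) \<in> lattice" if "x \<in> lattice" for x
    using refl_lat[OF weyl_step.hyps(1)] weyl_step.IH that by blast
  have s: "(\<Sum>b\<in>Phi. \<bar>refl_cochar cor a (w x) \<bullet> b\<bar>) = (\<Sum>b\<in>Phi. \<bar>x \<bullet> b\<bar>)" for x
    using refl_inner sum_sig[OF weyl_step.hyps(1), of "\<lambda>t. \<bar>w x \<bullet> t\<bar>"] weyl_step.IH by simp
  have n: "\<forall>b\<in>Phi. refl_cochar cor a (w x) \<bullet> b \<noteq> 0" if "\<forall>b\<in>Phi. x \<bullet> b \<noteq> 0" for x
    using refl_inner sig_in[OF weyl_step.hyps(1)] weyl_step.IH that by simp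
  show ?case using l s n by simp
qed


lemma alcove_ne: "\<exists>y. y \<in> base_alcove Phip"
proof -
  define M where "M = (\<Sum>a\<in>Phip. v \<bullet> a)"
  have M0: "M \<ge> 0" unfolding M_def using Phip_pos by (intro sum_nonneg) (auto intro: less_imp_le)
  define y where "y = (1 / (M + 1)) *\<^sub>R v"
  have "y \<in> base_alcove Phip"
    unfolding base_alcove_def
  proof (safe)
    fix a assume a: "a \<in> Phip"
    have va: "v \<bullet> a > 0" using Phip_pos[OF a] .
    have vM: "v \<bullet> a \<le> M" unfolding M_def using a finPhip Phip_pos
      by (intro member_le_sum) (auto intro: less_imp_le)
    have ya: "y \<bullet> a = v \<bullet> a / (M + 1)" by (simp add: y_def)
    show "0 < y \<bullet> a" using ya va M0 by simp
    show "y \<bullet> a < 1" using ya vM M0 by (simp add: divide_less_eq)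
  qed
  then show ?thesis by blast
qed

lemma act_transl: "act (transl m) y = m + y" by (simp add: act_def transl_def)

lemma sep_iff:
  assumes a: "a \<in> Phip" and x: "x \<in> lattice"
  shows "separates a (of_int k) (base_alcove Phip) (act (transl x) ` base_alcove Phip)
     \<longleftrightarrow> (1 \<le> k \<and> k \<le> \<lfloor>x \<bullet> a\<rfloor>) \<or> (\<lfloor>x \<bullet> a\<rfloor> + 1 \<le> k \<and> k \<le> 0)"
proof -
  define n where "n = \<lfloor>x \<bullet> a\<rfloor>"
  have "x \<bullet> a \<in> \<int>" using lattice_inner_Ints[OF x Phi_lat[OF Phip_Phi[OF a]]] .
  then have xn: "x \<bullet> a = of_int n" unfolding n_def by (auto elim: Ints_cases)
  have A: "0 < y \<bullet> a \<and> y \<bullet> a < 1" if "y \<in> base_alcove Phip" for y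
    using that a unfolding base_alcove_def by auto
  obtain y0 where y0: "y0 \<in> base_alcove Phip" using alcove_ne by blast
  have th: "0 < y0 \<bullet> a" "y0 \<bullet> a < 1" using A[OF y0] by auto
  have sep_eq: "separates a (of_int k) (base_alcove Phip) (act (transl x) ` base_alcove Phip) \<longleftrightarrow>
     (((\<forall>y\<in>base_alcove Phip. y \<bullet> a < of_int k) \<and> (\<forall>y\<in>base_alcove Phip. of_int k < of_int n + y \<bullet> a)) \<or>
       ((\<forall>y\<in>base_alcove Phip. of_int k < y \<bullet> a) \<and> (\<forall>y\<in>base_alcove Phip. of_int n + y \<bullet> a < of_int k)))"
    unfolding separates_def by (simp add: act_transl inner_add_left xn)
  have L: "(((\<forall>y\<in>base_alcove Phip. y \<bullet> a < of_int k) \<and> (\<forall>y\<in>base_alcove Phip. of_int k < of_int n + y \<bullet> a)) \<or>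
       ((\<forall>y\<in>base_alcove Phip. of_int k < y \<bullet> a) \<and> (\<forall>y\<in>base_alcove Phip. of_int n + y \<bullet> a < of_int k)))
     \<longleftrightarrow> (1 \<le> k \<and> k \<le> n \<or> n + 1 \<le> k \<and> k \<le> 0)"
  proof
    assume "((\<forall>y\<in>base_alcove Phip. y \<bullet> a < of_int k) \<and> (\<forall>y\<in>base_alcove Phip. of_int k < of_int n + y \<bullet> a)) \<or>
       ((\<forall>y\<in>base_alcove Phip. of_int k < y \<bullet> a) \<and> (\<forall>y\<in>base_alcove Phip. of_int n + y \<bullet> a < of_int k))"
    then show "1 \<le> k \<and> k \<le> n \<or> n + 1 \<le> k \<and> k \<le> 0"
    proof
      assume h: "(\<forall>y\<in>base_alcove Phip. y \<bullet> a < of_int k) \<and> (\<forall>y\<in>base_alcove Phip. of_int k < of_int n + y \<bullet> a)"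
      have "y0 \<bullet> a < of_int k" "of_int k < of_int n + y0 \<bullet> a" using h y0 by auto
      then have "real_of_int 0 < of_int k" "real_of_int k < of_int (n + 1)" using th by auto
      then have "0 < k" "k < n + 1" by (simp_all only: of_int_less_iff)
      then show ?thesis by simp
    next
      assume h: "(\<forall>y\<in>base_alcove Phip. of_int k < y \<bullet> a) \<and> (\<forall>y\<in>base_alcove Phip. of_int n + y \<bullet> a < of_int k)"
      have "of_int k < y0 \<bullet> a" "of_int n + y0 \<bullet> a < of_int k" using h y0 by auto
      then have "real_of_int k < of_int 1" "real_of_int n < of_int k" using th by auto
      then have "k < 1" "n < k" by (simp_all only: of_int_less_iff)
      then show ?thesis by simp
    qed
  next
    assume "1 \<le> k \<and> k \<le> n \<or> n + 1 \<le> k \<and> k \<le> 0"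
    then show "((\<forall>y\<in>base_alcove Phip. y \<bullet> a < of_int k) \<and> (\<forall>y\<in>base_alcove Phip. of_int k < of_int n + y \<bullet> a)) \<or>
       ((\<forall>y\<in>base_alcove Phip. of_int k < y \<bullet> a) \<and> (\<forall>y\<in>base_alcove Phip. of_int n + y \<bullet> a < of_int k))"
    proof
      assume h: "1 \<le> k \<and> k \<le> n"
      then have k1: "real_of_int 1 \<le> of_int k" "real_of_int k \<le> of_int n" by (simp_all only: of_int_le_iff)
      have "\<forall>y\<in>base_alcove Phip. y \<bullet> a < of_int k"
      proof
        fix y assume "y \<in> base_alcove Phip"
        from A[OF this] k1 show "y \<bullet> a < of_int k" by simp
      qed
      moreover have "\<forall>y\<in>base_alcove Phip. of_int k < of_int n + y \<bullet> a"
      proof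
        fix y assume "y \<in> base_alcove Phip"
        from A[OF this] k1 show "of_int k < of_int n + y \<bullet> a" by simp
      qed
      ultimately show ?thesis by blast
    next
      assume h: "n + 1 \<le> k \<and> k \<le> 0"
      then have k1: "real_of_int (n + 1) \<le> of_int k" "real_of_int k \<le> of_int 0" by (simp_all only: of_int_le_iff)
      have "\<forall>y\<in>base_alcove Phip. of_int k < y \<bullet> a"
      proof
        fix y assume "y \<in> base_alcove Phip"
        from A[OF this] k1 show "of_int k < y \<bullet> a" by simp
      qed
      moreover have "\<forall>y\<in>base_alcove Phip. of_int n + y \<bullet> a < of_int k"
      proof
        fix y assume "y \<in> base_alcove Phip"
        from A[OF this] k1 show "of_int n + y \<bullet> a < of_int k" by simp
      qed
      ultimately show ?thesis by blast
    qed
  qed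
  show ?thesis using sep_eq L n_def by simp
qed

lemma len_transl:
  assumes x: "x \<in> lattice"
  shows "real (ew_length Phip (transl x)) = (\<Sum>a\<in>Phip. \<bar>x \<bullet> a\<bar>)"
proof -
  define nf where "nf a = \<lfloor>x \<bullet> a\<rfloor>" for a
  define K where "K a = (if 0 \<le> nf a then {1..nf a} else {nf a+1..0})" for a
  have Kmem: "k \<in> K a \<longleftrightarrow> (1 \<le> k \<and> k \<le> nf a) \<or> (nf a + 1 \<le> k \<and> k \<le> 0)" for a k
    unfolding K_def by auto
  have mem: "(a \<in> Phip \<and> separates a (of_int k) (base_alcove Phip) (act (transl x) ` base_alcove Phip))
      \<longleftrightarrow> (a \<in> Phip \<and> k \<in> K a)" for a k
  proof (cases "a \<in> Phip")
    case True
    show ?thesis using sep_iff[OF True x, of k] Kmem[of k a] True unfolding nf_def by simp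
  next
    case False then show ?thesis by simp
  qed
  have seteq: "{(a, k::int). a \<in> Phip \<and> separates a (of_int k) (base_alcove Phip) (act (transl x) ` base_alcove Phip)}
      = Sigma Phip K"
    using mem by auto
  have cardK: "real (card (K a)) = \<bar>x \<bullet> a\<bar>" if a: "a \<in> Phip" for a
  proof -
    have "x \<bullet> a \<in> \<int>" using lattice_inner_Ints[OF x Phi_lat[OF Phip_Phi[OF a]]] .
    then have xn: "x \<bullet> a = of_int \<lfloor>x \<bullet> a\<rfloor>" by (auto elim: Ints_cases)
    define n where "n = \<lfloor>x \<bullet> a\<rfloor>"
    have Ka: "K a = (if 0 \<le> n then {1..n} else {n+1..0})" by (simp add: K_def n_def nf_def)
    have xn': "x \<bullet> a = of_int n" using xn n_def by simp
    show ?thesis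
    proof (cases "0 \<le> n")
      case True
      then have "card (K a) = nat n" using Ka by simp
      then show ?thesis using True xn' by simp
    next
      case False
      then have "card (K a) = nat (- n)" using Ka by simp
      then show ?thesis using False xn' by simp
    qed
  qed
  have "real (ew_length Phip (transl x)) = real (card (Sigma Phip K))"
    unfolding ew_length_def seteq ..
  also have "\<dots> = (\<Sum>a\<in>Phip. real (card (K a)))"
    using finPhip by (simp add: K_def)
  also have "\<dots> = (\<Sum>a\<in>Phip. \<bar>x \<bullet> a\<bar>)" using cardK by simp
  finally show ?thesis .
qed

lemma reg_nz:
  assumes r: "regular Phip (transl x)" and a: "a \<in> Phip" shows "x \<bullet> a \<noteq> 0"
proof
  assume x0: "x \<bullet> a = 0"
  have "act (transl x) ` base_alcove Phip \<subseteq> {y. 0 < y \<bullet> a \<and> y \<bullet> a < 1}"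
  proof
    fix z assume "z \<in> act (transl x) ` base_alcove Phip"
    then obtain y where y: "y \<in> base_alcove Phip" and z: "z = x + y" using act_transl by auto
    have "0 < y \<bullet> a \<and> y \<bullet> a < 1" using y a unfolding base_alcove_def by blast
    then show "z \<in> {y. 0 < y \<bullet> a \<and> y \<bullet> a < 1}" using z x0 by (simp add: inner_add_left)
  qed
  then show False using r a unfolding regular_def by blast
qed

lemma reg_of:
  assumes x: "x \<in> lattice" and nz: "\<forall>b\<in>Phi. x \<bullet> b \<noteq> 0" shows "regular Phip (transl x)"
  unfolding regular_def
proof
  assume "\<exists>a\<in>Phip. act (transl x) ` base_alcove Phip \<subseteq> {y. 0 < y \<bullet> a \<and> y \<bullet> a < 1}"
  then obtain a where a: "a \<in> Phip" and sub: "act (transl x) ` base_alcove Phip \<subseteq> {y. 0 < y \<bullet> a \<and> y \<bullet> a < 1}"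
    by blast
  obtain y0 where y0: "y0 \<in> base_alcove Phip" using alcove_ne by blast
  have th: "0 < y0 \<bullet> a" "y0 \<bullet> a < 1" using y0 a unfolding base_alcove_def by auto
  have "act (transl x) y0 \<in> {y. 0 < y \<bullet> a \<and> y \<bullet> a < 1}"
    using sub imageI[OF y0, of "act (transl x)"] by (rule subsetD)
  then have "x + y0 \<in> {y. 0 < y \<bullet> a \<and> y \<bullet> a < 1}" by (simp only: act_transl)
  then have s: "0 < x \<bullet> a + y0 \<bullet> a" "x \<bullet> a + y0 \<bullet> a < 1" by (auto simp: inner_add_left)
  have "x \<bullet> a \<in> \<int>" using lattice_inner_Ints[OF x Phi_lat[OF Phip_Phi[OF a]]] .
  moreover have "x \<bullet> a \<noteq> 0" using nz a Phip_Phi by blast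
  ultimately have "1 \<le> \<bar>x \<bullet> a\<bar>" by (rule Ints_nonzero_abs_ge1)
  then show False using s th by linarith
qed

end

lemma bruhat_len:
  assumes "bruhat_le P cor x y" shows "x = y \<or> ew_length P x < ew_length P y"
  using assms unfolding bruhat_le_def
proof (induction rule: rtranclp_induct)
  case base then show ?case by simp
next
  case (step y z)
  from step.hyps(2) have "ew_length P y < ew_length P z" unfolding bruhat_step_def by (rule conjunct2)
  then show ?case using step.IH by (meson less_trans)
qed


theorem lemma8p4:
  fixes Phi Phip :: "(real^'n) set" and cor :: "real^'n \<Rightarrow> real^'n" and rho :: "real^'n"
  assumes "root_datum Phi cor" and "reduced_roots Phi" and "positive_system Phi Phip"
    and "rho \<in> lattice" and "\<forall>a\<in>simple_roots Phip. rho \<bullet> a = 1"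
  shows "{x \<in> adm_reg Phi Phip cor rho. \<exists>m\<in>lattice. x = transl m}
           = (\<lambda>w. transl (w rho)) ` weyl_group Phi cor"
proof -
  obtain v where v1: "\<forall>a\<in>Phi. v \<bullet> a \<noteq> 0" and v2: "Phip = {a\<in>Phi. v \<bullet> a > 0}"
    using assms(3) unfolding positive_system_def by blast
  interpret R: RD Phi Phip cor rho v
    by (intro RD.intro assms(1,2,4,5) v1 v2)
  show ?thesis
  proof (rule set_eqI, rule iffI)
    fix x assume "x \<in> {x \<in> adm_reg Phi Phip cor rho. \<exists>m\<in>lattice. x = transl m}"
    then obtain m where xa: "x \<in> adm Phi Phip cor rho" and reg: "regular Phip x"
      and m: "m \<in> lattice" and xm: "x = transl m"
      unfolding adm_reg_def by blast
    obtain w where w: "w \<in> weyl_group Phi cor" and bl: "bruhat_le Phip cor x (transl (w rho))"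
      using xa unfolding adm_def by blast
    have wl: "w rho \<in> lattice" using R.W_props[OF w] assms(4) by blast
    have mnz: "\<forall>b\<in>Phi. m \<bullet> b \<noteq> 0"
    proof
      fix b assume b: "b \<in> Phi"
      have reg': "regular Phip (transl m)" using reg xm by simp
      from R.pos_or_neg[OF b] show "m \<bullet> b \<noteq> 0"
      proof
        assume "b \<in> Phip" then show ?thesis using R.reg_nz[OF reg'] by blast
      next
        assume "- b \<in> Phip" then have "m \<bullet> (- b) \<noteq> 0" using R.reg_nz[OF reg'] by blast
        then show ?thesis by (simp add: inner_minus_right)
      qed
    qed
    have "x = transl (w rho)"
    proof (rule ccontr)
      assume ne: "x \<noteq> transl (w rho)"
      then have "ew_length Phip x < ew_length Phip (transl (w rho))" using bruhat_len[OF bl] by blast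
      then have lt: "real (ew_length Phip (transl m)) < real (ew_length Phip (transl (w rho)))"
        using xm by simp
      have e1: "real (ew_length Phip (transl m)) = (\<Sum>a\<in>Phip. \<bar>m \<bullet> a\<bar>)" using R.len_transl[OF m] .
      have e2: "real (ew_length Phip (transl (w rho))) = (\<Sum>a\<in>Phip. \<bar>w rho \<bullet> a\<bar>)"
        using R.len_transl[OF wl] .
      have i1: "(\<Sum>b\<in>Phi. \<bar>rho \<bullet> b\<bar>) \<le> (\<Sum>b\<in>Phi. \<bar>m \<bullet> b\<bar>)" using R.main_ineq[OF m mnz] .
      have i2: "(\<Sum>b\<in>Phi. \<bar>w rho \<bullet> b\<bar>) = (\<Sum>b\<in>Phi. \<bar>rho \<bullet> b\<bar>)" using R.W_props[OF w] by blast
      have "(\<Sum>a\<in>Phip. \<bar>w rho \<bullet> a\<bar>) \<le> (\<Sum>a\<in>Phip. \<bar>m \<bullet> a\<bar>)"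
        using i1 i2 R.sum_Phi_abs[of "w rho"] R.sum_Phi_abs[of m] by simp
      then show False using lt e1 e2 by simp
    qed
    then show "x \<in> (\<lambda>w. transl (w rho)) ` weyl_group Phi cor" using w by blast
  next
    fix x assume "x \<in> (\<lambda>w. transl (w rho)) ` weyl_group Phi cor"
    then obtain w where w: "w \<in> weyl_group Phi cor" and xw: "x = transl (w rho)" by blast
    have wl: "w rho \<in> lattice" using R.W_props[OF w] assms(4) by blast
    have nz: "\<forall>b\<in>Phi. w rho \<bullet> b \<noteq> 0" using R.W_props[OF w] R.rho_nz by blast
    have "x \<in> ext_affine_weyl Phi cor"
      using xw wl weyl_group.weyl_id unfolding ext_affine_weyl_def transl_def by auto
    moreover have "bruhat_le Phip cor x (transl (w rho))" unfolding bruhat_le_def xw by simp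
    ultimately have "x \<in> adm Phi Phip cor rho" using w unfolding adm_def by blast
    moreover have "regular Phip x" using R.reg_of[OF wl nz] xw by simp
    ultimately show "x \<in> {x \<in> adm_reg Phi Phip cor rho. \<exists>m\<in>lattice. x = transl m}"
      using xw wl unfolding adm_reg_def by blast
  qed
qed


end
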